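(* Let $(R,\mathfrak{m},k)$ be a commutative Noetherian local ring, let $x,y\in R$ and let $n\ge0$ be an integer. For an $R$-module $M$ the following are equivalent: (1) there is an exact sequence of $R$-modules $0 \to (R/(x))^n \to M \to R/(y) \to 0$; (2) there is an exact sequence of $R$-modules $R^{n+1} \xrightarrow{T(x,y,a_1,\dots,a_n)} R^{n+1} \to M \to 0$ for some elements $a_1,\dots,a_n\in((x):(0:y))$.
   Context: For $x,y,a_1,\dots,a_n\in R$, $T(x,y,a_1,\dots,a_n)$ denotes the $(n+1)\times(n+1)$ matrix whose upper-left $n\times n$ block is $x$ times the identity matrix, whose last column is $(a_1,\dots,a_n,y)^{T}$, and all of whose other entries are $0$; for $n=0$ it is the $1\times1$ matrix $(y)$. Here $((x):(0:y))=\{r\in R : r\,(0:y)\subseteq (x)\}$, where $(0:y)=\{r\in R: ry=0\}$. *)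

theory Defs
  imports "HOL-Algebra.Module" "HOL-Algebra.QuotRing" "HOL-Algebra.Ring_Divisibility"
begin

definition local_cring :: "('a, 'c) ring_scheme \<Rightarrow> bool" where
  "local_cring R \<longleftrightarrow> cring R \<and> (\<exists>!m. maximalideal m R)"

definition mod_hom ::
  "('a, 'c) ring_scheme \<Rightarrow> ('a, 'b, 'd) module_scheme \<Rightarrow> ('a, 'e, 'f) module_scheme \<Rightarrow> ('b \<Rightarrow> 'e) set" where
  "mod_hom R M N = {f. f \<in> carrier M \<rightarrow> carrier N
     \<and> (\<forall>u\<in>carrier M. \<forall>v\<in>carrier M. f (u \<oplus>\<^bsub>M\<^esub> v) = f u \<oplus>\<^bsub>N\<^esub> f v)
     \<and> (\<forall>r\<in>carrier R. \<forall>u\<in>carrier M. f (r \<odot>\<^bsub>M\<^esub> u) = r \<odot>\<^bsub>N\<^esub> f u)}"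

definition mod_ker :: "('a, 'b, 'd) module_scheme \<Rightarrow> ('a, 'e, 'f) module_scheme \<Rightarrow> ('b \<Rightarrow> 'e) \<Rightarrow> 'b set" where
  "mod_ker M N f = {u \<in> carrier M. f u = \<zero>\<^bsub>N\<^esub>}"

definition self_mod :: "('a, 'c) ring_scheme \<Rightarrow> ('a, 'a) module" where
  "self_mod R = \<lparr>carrier = carrier R, monoid.mult = monoid.mult R, one = \<one>\<^bsub>R\<^esub>,
     zero = \<zero>\<^bsub>R\<^esub>, add = add R, smult = monoid.mult R\<rparr>"

definition quot_mod :: "('a, 'c) ring_scheme \<Rightarrow> 'a set \<Rightarrow> ('a, 'a set) module" where
  "quot_mod R I = \<lparr>carrier = carrier (R Quot I), monoid.mult = monoid.mult (R Quot I),
     one = \<one>\<^bsub>R Quot I\<^esub>, zero = \<zero>\<^bsub>R Quot I\<^esub>, add = add (R Quot I),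
     smult = (\<lambda>r X. rcoset_mult R I (I +>\<^bsub>R\<^esub> r) X)\<rparr>"

definition pow_mod :: "('a, 'b, 'd) module_scheme \<Rightarrow> nat \<Rightarrow> ('a, nat \<Rightarrow> 'b) module" where
  "pow_mod M n = \<lparr>carrier = PiE {..<n} (\<lambda>_. carrier M),
     monoid.mult = (\<lambda>u v. \<lambda>i\<in>{..<n}. u i \<otimes>\<^bsub>M\<^esub> v i),
     one = (\<lambda>i\<in>{..<n}. \<one>\<^bsub>M\<^esub>),
     zero = (\<lambda>i\<in>{..<n}. \<zero>\<^bsub>M\<^esub>),
     add = (\<lambda>u v. \<lambda>i\<in>{..<n}. u i \<oplus>\<^bsub>M\<^esub> v i),
     smult = (\<lambda>r u. \<lambda>i\<in>{..<n}. r \<odot>\<^bsub>M\<^esub> u i)\<rparr>"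

definition short_exact ::
  "('a, 'c) ring_scheme \<Rightarrow> ('a, 'b1, 'd1) module_scheme \<Rightarrow> ('a, 'b2, 'd2) module_scheme
   \<Rightarrow> ('a, 'b3, 'd3) module_scheme \<Rightarrow> ('b1 \<Rightarrow> 'b2) \<Rightarrow> ('b2 \<Rightarrow> 'b3) \<Rightarrow> bool" where
  "short_exact R A M B f g \<longleftrightarrow> f \<in> mod_hom R A M \<and> g \<in> mod_hom R M B
     \<and> inj_on f (carrier A) \<and> f ` carrier A = mod_ker M B g \<and> g ` carrier M = carrier B"

definition presentation_exact ::
  "('a, 'c) ring_scheme \<Rightarrow> ('a, 'b1, 'd1) module_scheme \<Rightarrow> ('a, 'b2, 'd2) module_scheme
   \<Rightarrow> ('a, 'b3, 'd3) module_scheme \<Rightarrow> ('b1 \<Rightarrow> 'b2) \<Rightarrow> ('b2 \<Rightarrow> 'b3) \<Rightarrow> bool" where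
  "presentation_exact R F G M h g \<longleftrightarrow> h \<in> mod_hom R F G \<and> g \<in> mod_hom R G M
     \<and> h ` carrier F = mod_ker G M g \<and> g ` carrier G = carrier M"

definition mat_map :: "('a, 'c) ring_scheme \<Rightarrow> nat \<Rightarrow> nat \<Rightarrow> (nat \<Rightarrow> nat \<Rightarrow> 'a) \<Rightarrow> (nat \<Rightarrow> 'a) \<Rightarrow> nat \<Rightarrow> 'a" where
  "mat_map R m n A v = (\<lambda>i\<in>{..<m}. finsum R (\<lambda>j. A i j \<otimes>\<^bsub>R\<^esub> v j) {..<n})"

text \<open>The (n+1)x(n+1) matrix T(x,y,a_1,...,a_n), rows/columns indexed 0..n:
  x on the diagonal of the upper-left n x n block, last column (a_1,...,a_n,y), zeros elsewhere.\<close>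
definition T_mat :: "('a, 'c) ring_scheme \<Rightarrow> nat \<Rightarrow> 'a \<Rightarrow> 'a \<Rightarrow> (nat \<Rightarrow> 'a) \<Rightarrow> nat \<Rightarrow> nat \<Rightarrow> 'a" where
  "T_mat R n x y a i j =
     (if j = n then (if i = n then y else a (Suc i))
      else if i = j then x else \<zero>\<^bsub>R\<^esub>)"

definition annihilator :: "('a, 'c) ring_scheme \<Rightarrow> 'a \<Rightarrow> 'a set" where
  "annihilator R y = {r \<in> carrier R. r \<otimes>\<^bsub>R\<^esub> y = \<zero>\<^bsub>R\<^esub>}"

definition colon_ideal :: "('a, 'c) ring_scheme \<Rightarrow> 'a set \<Rightarrow> 'a set \<Rightarrow> 'a set" where
  "colon_ideal R I J = {r \<in> carrier R. \<forall>s\<in>J. r \<otimes>\<^bsub>R\<^esub> s \<in> I}"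

end

theory Submission
  imports Defs
begin


lemma pow_mod_simps:
  "carrier (pow_mod M n) = PiE {..<n} (\<lambda>_. carrier M)"
  "u \<oplus>\<^bsub>pow_mod M n\<^esub> v = (\<lambda>i\<in>{..<n}. u i \<oplus>\<^bsub>M\<^esub> v i)"
  "\<zero>\<^bsub>pow_mod M n\<^esub> = (\<lambda>i\<in>{..<n}. \<zero>\<^bsub>M\<^esub>)"
  "r \<odot>\<^bsub>pow_mod M n\<^esub> u = (\<lambda>i\<in>{..<n}. r \<odot>\<^bsub>M\<^esub> u i)"
  by (simp_all add: pow_mod_def)

lemma quot_mod_simps:
  "carrier (quot_mod R I) = a_rcosets\<^bsub>R\<^esub> I"
  "X \<oplus>\<^bsub>quot_mod R I\<^esub> Y = X <+>\<^bsub>R\<^esub> Y"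
  "\<zero>\<^bsub>quot_mod R I\<^esub> = I"
  "r \<odot>\<^bsub>quot_mod R I\<^esub> X = rcoset_mult R I (I +>\<^bsub>R\<^esub> r) X"
  by (simp_all add: quot_mod_def FactRing_def)

lemma self_mod_simps:
  "carrier (self_mod R) = carrier R"
  "u \<oplus>\<^bsub>self_mod R\<^esub> v = u \<oplus>\<^bsub>R\<^esub> v"
  "\<zero>\<^bsub>self_mod R\<^esub> = \<zero>\<^bsub>R\<^esub>"
  "r \<odot>\<^bsub>self_mod R\<^esub> u = r \<otimes>\<^bsub>R\<^esub> u"
  by (simp_all add: self_mod_def)

definition qv :: "('a,'c) ring_scheme \<Rightarrow> 'a set \<Rightarrow> nat \<Rightarrow> (nat \<Rightarrow> 'a) \<Rightarrow> nat \<Rightarrow> 'a set" where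
  "qv R I n c = (\<lambda>j\<in>{..<n}. I +>\<^bsub>R\<^esub> c j)"

context cring begin
lemma T_eval:
  assumes a: "\<forall>i\<in>{1..n}. a i \<in> carrier R" and x: "x \<in> carrier R" and y: "y \<in> carrier R"
    and v: "v \<in> {..<n+1} \<rightarrow> carrier R"
  shows "mat_map R (n+1) (n+1) (T_mat R n x y a) v =
    (\<lambda>i\<in>{..<n+1}. if i = n then y \<otimes> v n else x \<otimes> v i \<oplus> a (Suc i) \<otimes> v n)"
proof
  fix i
  show "mat_map R (n+1) (n+1) (T_mat R n x y a) v i =
    (\<lambda>i\<in>{..<n+1}. if i = n then y \<otimes> v n else x \<otimes> v i \<oplus> a (Suc i) \<otimes> v n) i"
  proof (cases "i < n+1")
    case False thus ?thesis by (simp add: mat_map_def)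
  next
    case True
    have vc: "\<And>j. j < n+1 \<Longrightarrow> v j \<in> carrier R" using v by auto
    have ac: "\<And>j. j < n \<Longrightarrow> a (Suc j) \<in> carrier R" using a by auto
    have Tc: "\<And>j. j < n+1 \<Longrightarrow> T_mat R n x y a i j \<in> carrier R"
      using ac x y True by (auto simp: T_mat_def)
    have split: "(\<Oplus>j\<in>{..<n+1}. T_mat R n x y a i j \<otimes> v j)
        = T_mat R n x y a i n \<otimes> v n \<oplus> (\<Oplus>j\<in>{..<n}. T_mat R n x y a i j \<otimes> v j)"
      using Tc vc by (simp add: lessThan_Suc finsum_insert Pi_def)
    show ?thesis
    proof (cases "i = n")
      case True
      have "(\<Oplus>j\<in>{..<n}. T_mat R n x y a i j \<otimes> v j) = (\<Oplus>j\<in>{..<n}. \<zero>)"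
        using vc True by (intro finsum_cong) (auto simp: T_mat_def)
      thus ?thesis using split True vc y by (simp add: mat_map_def T_mat_def)
    next
      case False
      hence iln: "i < n" using \<open>i < n+1\<close> by simp
      have "(\<Oplus>j\<in>{..<n}. T_mat R n x y a i j \<otimes> v j) = (\<Oplus>j\<in>{..<n}. if i = j then x \<otimes> v j else \<zero>)"
        using vc x by (intro finsum_cong) (auto simp: T_mat_def simp_implies_def)
      also have "\<dots> = x \<otimes> v i"
        using vc x iln by (intro finsum_singleton) auto
      finally show ?thesis using split iln vc x ac by (simp add: mat_map_def T_mat_def a_comm)
    qed
  qed
qed



lemma rcos_eq_iff:
  assumes "ideal I R" "a \<in> carrier R" "b \<in> carrier R"
  shows "(I +> a = I +> b) = (a \<ominus> b \<in> I)"
proof -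
  interpret I: ideal I R by fact
  have S: "abelian_subgroup I R"
    using abelian_subgroupI3[OF ideal.axioms(1)[OF assms(1)] is_abelian_group] .
  show ?thesis
  proof
    assume e: "I +> a = I +> b"
    have "a \<in> I +> a" using assms abelian_subgroup.a_rcos_self[OF S] by blast
    hence "a \<in> I +> b" using e by simp
    thus "a \<ominus> b \<in> I" using abelian_subgroup.a_rcos_module_minus[OF S ring_axioms] assms by blast
  next
    assume "a \<ominus> b \<in> I"
    hence "a \<in> I +> b" using abelian_subgroup.a_rcos_module_minus[OF S ring_axioms] assms by blast
    thus "I +> a = I +> b" using abelian_subgroup.a_repr_independence'[OF S] assms by metis
  qed
qed

lemma rcos_zero_iff:
  assumes "ideal I R" "a \<in> carrier R"
  shows "(I +> a = I) = (a \<in> I)"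
  using assms ideal.rcos_const_imp_mem a_rcos_zero by metis

lemma rcos_in_rcosets:
  assumes "ideal I R" "a \<in> carrier R"
  shows "I +> a \<in> a_rcosets I"
  using assms by (auto simp add: A_RCOSETS_def')

lemma rcosets_rep:
  assumes "X \<in> a_rcosets I"
  shows "\<exists>r\<in>carrier R. X = I +> r"
  using assms by (auto simp add: A_RCOSETS_def')

lemma quot_add:
  assumes "ideal I R" "a \<in> carrier R" "b \<in> carrier R"
  shows "(I +> a) \<oplus>\<^bsub>quot_mod R I\<^esub> (I +> b) = I +> (a \<oplus> b)"
  using assms by (simp add: quot_mod_simps ideal.a_rcos_sum)

lemma quot_smult:
  assumes "ideal I R" "a \<in> carrier R" "b \<in> carrier R"
  shows "a \<odot>\<^bsub>quot_mod R I\<^esub> (I +> b) = I +> (a \<otimes> b)"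
  using assms by (simp add: quot_mod_simps ideal.rcoset_mult_add)

lemma quot_zero:
  assumes "ideal I R"
  shows "\<zero>\<^bsub>quot_mod R I\<^esub> = I +> \<zero>"
  using assms by (simp add: quot_mod_simps a_rcos_zero additive_subgroup.zero_closed ideal.axioms(1))

lemma PIdl_mem:
  "r \<in> PIdl y \<longleftrightarrow> (\<exists>d\<in>carrier R. r = d \<otimes> y)"
  by (auto simp: cgenideal_def)

lemma qv_carrier:
  assumes "ideal I R" "\<And>j. j < n \<Longrightarrow> c j \<in> carrier R"
  shows "qv R I n c \<in> carrier (pow_mod (quot_mod R I) n)"
  using assms rcos_in_rcosets by (auto simp: qv_def pow_mod_simps quot_mod_simps)

lemma qv_cong:
  assumes "\<And>j. j < n \<Longrightarrow> c j = d j"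
  shows "qv R I n c = qv R I n d"
  unfolding qv_def by (rule restrict_ext) (simp add: assms)

lemma qv_add:
  assumes "ideal I R" "\<And>j. j < n \<Longrightarrow> c j \<in> carrier R" "\<And>j. j < n \<Longrightarrow> d j \<in> carrier R"
  shows "qv R I n c \<oplus>\<^bsub>pow_mod (quot_mod R I) n\<^esub> qv R I n d = qv R I n (\<lambda>j. c j \<oplus> d j)"
  unfolding qv_def pow_mod_simps quot_mod_simps by (rule restrict_ext) (simp add: assms ideal.a_rcos_sum)

lemma qv_smult:
  assumes "ideal I R" "r \<in> carrier R" "\<And>j. j < n \<Longrightarrow> c j \<in> carrier R"
  shows "r \<odot>\<^bsub>pow_mod (quot_mod R I) n\<^esub> qv R I n c = qv R I n (\<lambda>j. r \<otimes> c j)"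
  unfolding qv_def pow_mod_simps by (rule restrict_ext) (simp add: assms quot_smult)

lemma qv_zero:
  assumes "ideal I R"
  shows "\<zero>\<^bsub>pow_mod (quot_mod R I) n\<^esub> = qv R I n (\<lambda>_. \<zero>)"
  using assms by (auto simp: qv_def pow_mod_simps quot_zero)

lemma qv_eq:
  assumes "ideal I R" "\<And>j. j < n \<Longrightarrow> c j \<in> carrier R" "\<And>j. j < n \<Longrightarrow> d j \<in> carrier R"
  shows "(qv R I n c = qv R I n d) = (\<forall>j<n. c j \<ominus> d j \<in> I)"
proof
  assume e: "qv R I n c = qv R I n d"
  show "\<forall>j<n. c j \<ominus> d j \<in> I"
  proof (intro allI impI)
    fix j assume "j < n"
    hence "I +> c j = I +> d j" using fun_cong[OF e, of j] by (simp add: qv_def)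
    thus "c j \<ominus> d j \<in> I" using rcos_eq_iff assms \<open>j < n\<close> by blast
  qed
next
  assume "\<forall>j<n. c j \<ominus> d j \<in> I"
  thus "qv R I n c = qv R I n d" unfolding qv_def
    by (intro restrict_ext) (simp add: rcos_eq_iff assms)
qed

lemma qv_rep:
  assumes "u \<in> carrier (pow_mod (quot_mod R I) n)"
  shows "\<exists>c. (\<forall>j<n. c j \<in> carrier R) \<and> u = qv R I n c"
proof -
  have "\<forall>j\<in>{..<n}. \<exists>r\<in>carrier R. u j = I +> r"
    using assms rcosets_rep by (auto simp: pow_mod_simps quot_mod_simps)
  then obtain c where c: "\<forall>j\<in>{..<n}. c j \<in> carrier R \<and> u j = I +> c j"
    by metis
  have "u = qv R I n c"
  proof
    fix j show "u j = qv R I n c j"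
      using c assms by (cases "j < n") (auto simp: qv_def pow_mod_simps PiE_def extensional_def)
  qed
  thus ?thesis using c by auto
qed

lemma T_hom:
  assumes a: "\<forall>i\<in>{1..n}. a i \<in> carrier R" and x: "x \<in> carrier R" and y: "y \<in> carrier R"
  shows "mat_map R (n+1) (n+1) (T_mat R n x y a) \<in> mod_hom R (pow_mod (self_mod R) (n+1)) (pow_mod (self_mod R) (n+1))"
proof -
  have ac: "\<And>j. j < n \<Longrightarrow> a (Suc j) \<in> carrier R" using a by auto
  have F: "\<And>v. v \<in> carrier (pow_mod (self_mod R) (n+1)) \<Longrightarrow> v \<in> {..<n+1} \<rightarrow> carrier R"
    by (auto simp: pow_mod_simps self_mod_simps)
  show ?thesis
    unfolding mod_hom_def
  proof (intro CollectI conjI ballI)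
    show "mat_map R (n+1) (n+1) (T_mat R n x y a) \<in> carrier (pow_mod (self_mod R) (n+1)) \<rightarrow> carrier (pow_mod (self_mod R) (n+1))"
      using F T_eval[OF a x y] ac x y by (auto simp: pow_mod_simps self_mod_simps Pi_def)
  next
    fix u v assume u: "u \<in> carrier (pow_mod (self_mod R) (n+1))" and v: "v \<in> carrier (pow_mod (self_mod R) (n+1))"
    have uv: "u \<oplus>\<^bsub>pow_mod (self_mod R) (n+1)\<^esub> v \<in> {..<n+1} \<rightarrow> carrier R"
      using F[OF u] F[OF v] by (auto simp: pow_mod_simps self_mod_simps)
    have uc: "\<And>i. i < n+1 \<Longrightarrow> u i \<in> carrier R" and vc: "\<And>i. i < n+1 \<Longrightarrow> v i \<in> carrier R"
      using F[OF u] F[OF v] by auto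
    show "mat_map R (n+1) (n+1) (T_mat R n x y a) (u \<oplus>\<^bsub>pow_mod (self_mod R) (n+1)\<^esub> v) =
       mat_map R (n+1) (n+1) (T_mat R n x y a) u \<oplus>\<^bsub>pow_mod (self_mod R) (n+1)\<^esub> mat_map R (n+1) (n+1) (T_mat R n x y a) v"
      unfolding T_eval[OF a x y uv] T_eval[OF a x y F[OF u]] T_eval[OF a x y F[OF v]]
    proof (rule ext)
      fix i
      show "(\<lambda>i\<in>{..<n+1}. if i = n then y \<otimes> (u \<oplus>\<^bsub>pow_mod (self_mod R) (n+1)\<^esub> v) n
              else x \<otimes> (u \<oplus>\<^bsub>pow_mod (self_mod R) (n+1)\<^esub> v) i \<oplus> a (Suc i) \<otimes> (u \<oplus>\<^bsub>pow_mod (self_mod R) (n+1)\<^esub> v) n) i =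
        ((\<lambda>i\<in>{..<n+1}. if i = n then y \<otimes> u n else x \<otimes> u i \<oplus> a (Suc i) \<otimes> u n) \<oplus>\<^bsub>pow_mod (self_mod R) (n+1)\<^esub>
         (\<lambda>i\<in>{..<n+1}. if i = n then y \<otimes> v n else x \<otimes> v i \<oplus> a (Suc i) \<otimes> v n)) i"
      proof (cases "i < n+1")
        case True
        note c = uc[OF True] vc[OF True] uc[of n] vc[of n]
        show ?thesis
        proof (cases "i = n")
          case True thus ?thesis using c y by (simp add: pow_mod_simps self_mod_simps r_distr)
        next
          case False
          hence "a (Suc i) \<in> carrier R" using ac \<open>i < n+1\<close> by simp
          thus ?thesis using False \<open>i < n+1\<close> c x y
            by (simp add: pow_mod_simps self_mod_simps r_distr) algebra
        qed
      qed (simp add: pow_mod_simps)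
    qed
  next
    fix r u assume r: "r \<in> carrier R" and u: "u \<in> carrier (pow_mod (self_mod R) (n+1))"
    have ru: "r \<odot>\<^bsub>pow_mod (self_mod R) (n+1)\<^esub> u \<in> {..<n+1} \<rightarrow> carrier R"
      using F[OF u] r by (auto simp: pow_mod_simps self_mod_simps)
    have uc: "\<And>i. i < n+1 \<Longrightarrow> u i \<in> carrier R" using F[OF u] by auto
    show "mat_map R (n+1) (n+1) (T_mat R n x y a) (r \<odot>\<^bsub>pow_mod (self_mod R) (n+1)\<^esub> u) =
       r \<odot>\<^bsub>pow_mod (self_mod R) (n+1)\<^esub> mat_map R (n+1) (n+1) (T_mat R n x y a) u"
      unfolding T_eval[OF a x y ru] T_eval[OF a x y F[OF u]]
    proof (rule ext)
      fix i
      show "(\<lambda>i\<in>{..<n+1}. if i = n then y \<otimes> (r \<odot>\<^bsub>pow_mod (self_mod R) (n+1)\<^esub> u) n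
              else x \<otimes> (r \<odot>\<^bsub>pow_mod (self_mod R) (n+1)\<^esub> u) i \<oplus> a (Suc i) \<otimes> (r \<odot>\<^bsub>pow_mod (self_mod R) (n+1)\<^esub> u) n) i =
        (r \<odot>\<^bsub>pow_mod (self_mod R) (n+1)\<^esub>
         (\<lambda>i\<in>{..<n+1}. if i = n then y \<otimes> u n else x \<otimes> u i \<oplus> a (Suc i) \<otimes> u n)) i"
      proof (cases "i < n+1")
        case True
        note c = uc[OF True] uc[of n]
        show ?thesis
        proof (cases "i = n")
          case True thus ?thesis using c y r by (simp add: pow_mod_simps self_mod_simps) algebra
        next
          case False
          hence "a (Suc i) \<in> carrier R" using ac \<open>i < n+1\<close> by simp
          thus ?thesis using False \<open>i < n+1\<close> c x y r
            by (simp add: pow_mod_simps self_mod_simps) algebra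
        qed
      qed (simp add: pow_mod_simps)
    qed
  qed
qed

end


lemma (in module) dir12:
  assumes xc: "x \<in> carrier R" and yc: "y \<in> carrier R"
    and se: "short_exact R (pow_mod (quot_mod R (PIdl x)) n) M (quot_mod R (PIdl y)) f h"
  shows "\<exists>a g. (\<forall>i\<in>{1..n}. a i \<in> colon_ideal R (PIdl x) (annihilator R y))
     \<and> presentation_exact R (pow_mod (self_mod R) (n + 1)) (pow_mod (self_mod R) (n + 1)) M
          (mat_map R (n + 1) (n + 1) (T_mat R n x y a)) g"
proof -
  let ?I = "PIdl x" let ?J = "PIdl y"
  let ?Q = "pow_mod (quot_mod R ?I) n" let ?B = "quot_mod R ?J"
  let ?F = "pow_mod (self_mod R) (n+1)"
  have I: "ideal ?I R" using xc by (rule cgenideal_ideal)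
  have J: "ideal ?J R" using yc by (rule cgenideal_ideal)
  from se have fh: "f \<in> mod_hom R ?Q M" "h \<in> mod_hom R M ?B" "inj_on f (carrier ?Q)"
    "f ` carrier ?Q = mod_ker M ?B h" "h ` carrier M = carrier ?B"
    by (simp_all add: short_exact_def)
  have fc: "\<And>u. u \<in> carrier ?Q \<Longrightarrow> f u \<in> carrier M" using fh(1) by (auto simp: mod_hom_def)
  have fadd: "\<And>u v. u \<in> carrier ?Q \<Longrightarrow> v \<in> carrier ?Q \<Longrightarrow> f (u \<oplus>\<^bsub>?Q\<^esub> v) = f u \<oplus>\<^bsub>M\<^esub> f v"
    using fh(1) by (auto simp: mod_hom_def)
  have fsm: "\<And>r u. r \<in> carrier R \<Longrightarrow> u \<in> carrier ?Q \<Longrightarrow> f (r \<odot>\<^bsub>?Q\<^esub> u) = r \<odot>\<^bsub>M\<^esub> f u"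
    using fh(1) by (auto simp: mod_hom_def)
  have hc: "\<And>u. u \<in> carrier M \<Longrightarrow> h u \<in> carrier ?B" using fh(2) by (auto simp: mod_hom_def)
  have hadd: "\<And>u v. u \<in> carrier M \<Longrightarrow> v \<in> carrier M \<Longrightarrow> h (u \<oplus>\<^bsub>M\<^esub> v) = h u \<oplus>\<^bsub>?B\<^esub> h v"
    using fh(2) by (auto simp: mod_hom_def)
  have hsm: "\<And>r u. r \<in> carrier R \<Longrightarrow> u \<in> carrier M \<Longrightarrow> h (r \<odot>\<^bsub>M\<^esub> u) = r \<odot>\<^bsub>?B\<^esub> h u"
    using fh(2) by (auto simp: mod_hom_def)
  have qvc: "\<And>c. (\<And>j. j<n \<Longrightarrow> c j \<in> carrier R) \<Longrightarrow> qv R ?I n c \<in> carrier ?Q"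
    using qv_carrier[OF I] by blast
  have q0c: "qv R ?I n (\<lambda>_. \<zero>) \<in> carrier ?Q" using qvc by simp
  have f0: "f (qv R ?I n (\<lambda>_. \<zero>)) = \<zero>\<^bsub>M\<^esub>"
  proof -
    have e: "qv R ?I n (\<lambda>_. \<zero>) = \<zero> \<odot>\<^bsub>?Q\<^esub> qv R ?I n (\<lambda>_. \<zero>)"
      using qv_smult[OF I, of \<zero> n "\<lambda>_. \<zero>"] by simp
    have "f (qv R ?I n (\<lambda>_. \<zero>)) = \<zero> \<odot>\<^bsub>M\<^esub> f (qv R ?I n (\<lambda>_. \<zero>))"
      using fsm[OF R.zero_closed q0c] e by metis
    thus ?thesis using fc qvc[of "\<lambda>_. \<zero>"] by simp
  qed
  have finj0: "\<And>c. (\<And>j. j<n \<Longrightarrow> c j \<in> carrier R) \<Longrightarrow> f (qv R ?I n c) = \<zero>\<^bsub>M\<^esub> \<Longrightarrow> \<forall>j<n. c j \<in> ?I"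
  proof -
    fix c assume c: "\<And>j. j<n \<Longrightarrow> c j \<in> carrier R" and e: "f (qv R ?I n c) = \<zero>\<^bsub>M\<^esub>"
    have "qv R ?I n c = qv R ?I n (\<lambda>_. \<zero>)"
      using fh(3) e f0 qvc[OF c] qvc[of "\<lambda>_. \<zero>"] by (simp add: inj_on_def)
    thus "\<forall>j<n. c j \<in> ?I" using qv_eq[OF I, of n c "\<lambda>_. \<zero>"] c by (simp add: R.minus_eq)
  qed
  have h0: "h \<zero>\<^bsub>M\<^esub> = ?J"
  proof -
    obtain c where c: "c \<in> carrier R" "h \<zero>\<^bsub>M\<^esub> = ?J +> c"
      using hc[of "\<zero>\<^bsub>M\<^esub>"] rcosets_rep[of "h \<zero>\<^bsub>M\<^esub>" ?J] by (auto simp: quot_mod_simps)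
    have "h \<zero>\<^bsub>M\<^esub> = h (\<zero> \<odot>\<^bsub>M\<^esub> \<zero>\<^bsub>M\<^esub>)" by simp
    also have "\<dots> = ?J +> (\<zero> \<otimes> c)" using hsm[of \<zero> "\<zero>\<^bsub>M\<^esub>"] c quot_smult[OF J] by simp
    also have "\<dots> = ?J" using c rcos_zero_iff[OF J] additive_subgroup.zero_closed[OF ideal.axioms(1)[OF J]] by simp
    finally show ?thesis .
  qed
  have kerh: "\<And>z. z \<in> carrier M \<Longrightarrow> h z = ?J \<Longrightarrow> \<exists>c. (\<forall>j<n. c j \<in> carrier R) \<and> z = f (qv R ?I n c)"
  proof -
    fix z assume "z \<in> carrier M" "h z = ?J"
    hence "z \<in> f ` carrier ?Q" using fh(4) by (simp add: mod_ker_def quot_mod_simps)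
    then obtain u where "u \<in> carrier ?Q" "z = f u" by auto
    thus "\<exists>c. (\<forall>j<n. c j \<in> carrier R) \<and> z = f (qv R ?I n c)" using qv_rep by blast
  qed
  have hf: "\<And>c. (\<And>j. j<n \<Longrightarrow> c j \<in> carrier R) \<Longrightarrow> h (f (qv R ?I n c)) = ?J"
  proof -
    fix c assume "\<And>j. j<n \<Longrightarrow> c j \<in> carrier R"
    hence "f (qv R ?I n c) \<in> mod_ker M ?B h" using fh(4) qvc by blast
    thus "h (f (qv R ?I n c)) = ?J" by (simp add: mod_ker_def quot_mod_simps)
  qed
  have J1: "?J +> \<one> \<in> carrier ?B" using rcos_in_rcosets[OF J R.one_closed] by (simp add: quot_mod_simps)
  then obtain m where m: "m \<in> carrier M" "h m = ?J +> \<one>"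
    using fh(5) by (metis imageE)
  have hsmm: "\<And>r. r \<in> carrier R \<Longrightarrow> h (r \<odot>\<^bsub>M\<^esub> m) = ?J +> r"
  proof -
    fix r assume r: "r \<in> carrier R"
    have "h (r \<odot>\<^bsub>M\<^esub> m) = r \<odot>\<^bsub>?B\<^esub> (?J +> \<one>)" using hsm[OF r m(1)] m(2) by simp
    also have "\<dots> = ?J +> (r \<otimes> \<one>)" by (rule quot_smult[OF J r R.one_closed])
    finally show "h (r \<odot>\<^bsub>M\<^esub> m) = ?J +> r" using r by simp
  qed
  have "h (y \<odot>\<^bsub>M\<^esub> m) = ?J" using hsmm[OF yc] rcos_zero_iff[OF J yc] cgenideal_self[OF yc] by simp
  then obtain b where b: "\<forall>j<n. b j \<in> carrier R" and ym: "y \<odot>\<^bsub>M\<^esub> m = f (qv R ?I n b)"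
    using kerh m yc by blast
  define a where "a = (\<lambda>i. \<ominus> b (i - 1))"
  have ac: "\<forall>i\<in>{1..n}. a i \<in> carrier R" using b by (auto simp: a_def)
  have aS: "\<And>j. a (Suc j) = \<ominus> b j" by (simp add: a_def)
  define g where "g = (\<lambda>v. f (qv R ?I n v) \<oplus>\<^bsub>M\<^esub> v n \<odot>\<^bsub>M\<^esub> m)"
  have Fc: "\<And>v i. v \<in> carrier ?F \<Longrightarrow> i < n+1 \<Longrightarrow> v i \<in> carrier R"
    by (auto simp: pow_mod_simps self_mod_simps)
  have Fc': "\<And>v i. v \<in> carrier ?F \<Longrightarrow> i < n \<Longrightarrow> v i \<in> carrier R"
    using Fc by simp
  have Fn: "\<And>v. v \<in> carrier ?F \<Longrightarrow> v n \<in> carrier R" using Fc by simp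
  have qvF: "\<And>v. v \<in> carrier ?F \<Longrightarrow> qv R ?I n v \<in> carrier ?Q"
    using qvc Fc' by blast
  have gc: "\<And>v. v \<in> carrier ?F \<Longrightarrow> g v \<in> carrier M"
    unfolding g_def using fc[OF qvF] smult_closed[OF Fn m(1)] by (simp add: M.add.m_closed)
  have Fadd: "\<And>v w. v \<oplus>\<^bsub>?F\<^esub> w = (\<lambda>i\<in>{..<n+1}. v i \<oplus> w i)"
    by (simp add: pow_mod_simps self_mod_simps)
  have Fsm: "\<And>r v. r \<odot>\<^bsub>?F\<^esub> v = (\<lambda>i\<in>{..<n+1}. r \<otimes> v i)"
    by (simp add: pow_mod_simps self_mod_simps)
  have g_hom: "g \<in> mod_hom R ?F M"
    unfolding mod_hom_def
  proof (intro CollectI conjI ballI)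
    show "g \<in> carrier ?F \<rightarrow> carrier M" using gc by blast
  next
    fix v w assume v: "v \<in> carrier ?F" and w: "w \<in> carrier ?F"
    have e1: "qv R ?I n (v \<oplus>\<^bsub>?F\<^esub> w) = qv R ?I n v \<oplus>\<^bsub>?Q\<^esub> qv R ?I n w"
    proof -
      have "qv R ?I n (v \<oplus>\<^bsub>?F\<^esub> w) = qv R ?I n (\<lambda>j. v j \<oplus> w j)"
        by (rule qv_cong) (simp add: pow_mod_simps self_mod_simps)
      thus ?thesis using qv_add[OF I Fc'[OF v] Fc'[OF w]] by simp
    qed
    have e2: "(v \<oplus>\<^bsub>?F\<^esub> w) n = v n \<oplus> w n" by (simp add: pow_mod_simps self_mod_simps)
    have c: "f (qv R ?I n v) \<in> carrier M" "f (qv R ?I n w) \<in> carrier M"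
      "v n \<odot>\<^bsub>M\<^esub> m \<in> carrier M" "w n \<odot>\<^bsub>M\<^esub> m \<in> carrier M"
      using fc qvF v w smult_closed Fn m(1) by auto
    show "g (v \<oplus>\<^bsub>?F\<^esub> w) = g v \<oplus>\<^bsub>M\<^esub> g w"
      unfolding g_def e1 e2 fadd[OF qvF[OF v] qvF[OF w]] smult_l_distr[OF Fn[OF v] Fn[OF w] m(1)]
      using c by (simp add: M.a_ac)
  next
    fix r v assume r: "r \<in> carrier R" and v: "v \<in> carrier ?F"
    have e1: "qv R ?I n (r \<odot>\<^bsub>?F\<^esub> v) = r \<odot>\<^bsub>?Q\<^esub> qv R ?I n v"
    proof -
      have "qv R ?I n (r \<odot>\<^bsub>?F\<^esub> v) = qv R ?I n (\<lambda>j. r \<otimes> v j)"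
        by (rule qv_cong) (simp add: pow_mod_simps self_mod_simps)
      thus ?thesis using qv_smult[OF I r Fc'[OF v]] by simp
    qed
    have e2: "(r \<odot>\<^bsub>?F\<^esub> v) n = r \<otimes> v n" by (simp add: pow_mod_simps self_mod_simps)
    show "g (r \<odot>\<^bsub>?F\<^esub> v) = r \<odot>\<^bsub>M\<^esub> g v"
      unfolding g_def e1 e2 fsm[OF r qvF[OF v]] smult_assoc1[OF r Fn[OF v] m(1)]
      using smult_r_distr[OF r fc[OF qvF[OF v]] smult_closed[OF Fn[OF v] m(1)]] by simp
  qed
  have gsurj: "g ` carrier ?F = carrier M"
  proof
    show "g ` carrier ?F \<subseteq> carrier M" using gc by blast
  next
    show "carrier M \<subseteq> g ` carrier ?F"
    proof
      fix z assume z: "z \<in> carrier M"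
      obtain c where c: "c \<in> carrier R" "h z = ?J +> c"
        using hc[OF z] rcosets_rep[of "h z" ?J] by (auto simp: quot_mod_simps)
      have mc: "(\<ominus> c) \<odot>\<^bsub>M\<^esub> m \<in> carrier M" using c m by simp
      have "h (z \<oplus>\<^bsub>M\<^esub> (\<ominus> c) \<odot>\<^bsub>M\<^esub> m) = (?J +> c) \<oplus>\<^bsub>?B\<^esub> (?J +> \<ominus> c)"
        using hadd[OF z mc] c hsmm[of "\<ominus> c"] by simp
      also have "\<dots> = ?J +> (c \<oplus> \<ominus> c)" using quot_add[OF J] c by simp
      also have "\<dots> = ?J" using c rcos_zero_iff[OF J] additive_subgroup.zero_closed[OF ideal.axioms(1)[OF J]]
        by (simp add: R.r_neg)
      finally obtain d where d: "\<forall>j<n. d j \<in> carrier R" "z \<oplus>\<^bsub>M\<^esub> (\<ominus> c) \<odot>\<^bsub>M\<^esub> m = f (qv R ?I n d)"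
        using kerh[of "z \<oplus>\<^bsub>M\<^esub> (\<ominus> c) \<odot>\<^bsub>M\<^esub> m"] z mc by auto
      define v where "v = (\<lambda>i\<in>{..<n+1}. if i < n then d i else c)"
      have vF: "v \<in> carrier ?F" using d c by (auto simp: v_def pow_mod_simps self_mod_simps)
      have "qv R ?I n v = qv R ?I n d" by (rule qv_cong) (simp add: v_def)
      moreover have "v n = c" by (simp add: v_def)
      ultimately have "g v = (z \<oplus>\<^bsub>M\<^esub> (\<ominus> c) \<odot>\<^bsub>M\<^esub> m) \<oplus>\<^bsub>M\<^esub> c \<odot>\<^bsub>M\<^esub> m"
        using d by (simp add: g_def)
      also have "\<dots> = z \<oplus>\<^bsub>M\<^esub> ((\<ominus> c \<oplus> c) \<odot>\<^bsub>M\<^esub> m)"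
        using z mc c m smult_l_distr[of "\<ominus> c" c m] by (simp add: M.a_assoc)
      also have "\<dots> = z" using c m z by (simp add: R.l_neg)
      finally show "z \<in> g ` carrier ?F" using vF by force
    qed
  qed
  let ?T = "mat_map R (n + 1) (n + 1) (T_mat R n x y a)"
  have Tev: "\<And>w. w \<in> carrier ?F \<Longrightarrow> ?T w = (\<lambda>i\<in>{..<n+1}. if i = n then y \<otimes> w n else x \<otimes> w i \<oplus> a (Suc i) \<otimes> w n)"
    using T_eval[OF ac xc yc] by (auto simp: pow_mod_simps self_mod_simps)
  have TevS: "\<And>w i. w \<in> carrier ?F \<Longrightarrow> i < n \<Longrightarrow> mat_map R (Suc n) (Suc n) (T_mat R n x y a) w i = x \<otimes> w i \<oplus> a (Suc i) \<otimes> w n"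
    using Tev by simp
  have TevSn: "\<And>w. w \<in> carrier ?F \<Longrightarrow> mat_map R (Suc n) (Suc n) (T_mat R n x y a) w n = y \<otimes> w n"
    using Tev by simp
  have TevSo: "\<And>w i. \<not> i < Suc n \<Longrightarrow> mat_map R (Suc n) (Suc n) (T_mat R n x y a) w i = undefined"
    by (simp add: mat_map_def)
  have Th: "?T \<in> mod_hom R ?F ?F" using T_hom[OF ac xc yc] by simp
  have TF: "\<And>w. w \<in> carrier ?F \<Longrightarrow> ?T w \<in> carrier ?F" using Th by (auto simp: mod_hom_def)
  have ymc: "y \<odot>\<^bsub>M\<^esub> m \<in> carrier M" using yc m by simp
  have ker1: "\<And>w. w \<in> carrier ?F \<Longrightarrow> g (?T w) = \<zero>\<^bsub>M\<^esub>"
  proof -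
    fix w assume w: "w \<in> carrier ?F"
    note wc = Fc'[OF w] Fn[OF w]
    have "qv R ?I n (?T w) = qv R ?I n (\<lambda>j. x \<otimes> w j \<oplus> \<ominus> b j \<otimes> w n)"
      by (rule qv_cong) (simp add: TevS[OF w] aS)
    also have "\<dots> = qv R ?I n (\<lambda>j. (\<ominus> w n) \<otimes> b j)"
    proof -
      have "\<forall>j<n. x \<otimes> w j \<oplus> \<ominus> b j \<otimes> w n \<ominus> \<ominus> w n \<otimes> b j \<in> ?I"
      proof (intro allI impI)
        fix j assume j: "j < n"
        have "x \<otimes> w j \<oplus> \<ominus> b j \<otimes> w n \<ominus> \<ominus> w n \<otimes> b j = w j \<otimes> x"
          using b j wc xc by (simp add: R.minus_eq) algebra
        thus "x \<otimes> w j \<oplus> \<ominus> b j \<otimes> w n \<ominus> \<ominus> w n \<otimes> b j \<in> ?I"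
          using wc j by (auto simp: PIdl_mem)
      qed
      thus ?thesis
        using qv_eq[OF I, of n "\<lambda>j. x \<otimes> w j \<oplus> \<ominus> b j \<otimes> w n" "\<lambda>j. \<ominus> w n \<otimes> b j"] b wc xc by auto
    qed
    also have "\<dots> = (\<ominus> w n) \<odot>\<^bsub>?Q\<^esub> qv R ?I n b"
      using qv_smult[OF I, of "\<ominus> w n" n b] b wc by simp
    finally have "f (qv R ?I n (?T w)) = (\<ominus> w n) \<odot>\<^bsub>M\<^esub> (y \<odot>\<^bsub>M\<^esub> m)"
      using fsm[of "\<ominus> w n" "qv R ?I n b"] qvc b wc ym by simp
    moreover have "(?T w) n = w n \<otimes> y" using TevSn[OF w] wc yc by (simp add: R.m_comm)
    ultimately have "g (?T w) = (\<ominus> w n) \<odot>\<^bsub>M\<^esub> (y \<odot>\<^bsub>M\<^esub> m) \<oplus>\<^bsub>M\<^esub> w n \<odot>\<^bsub>M\<^esub> (y \<odot>\<^bsub>M\<^esub> m)"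
      using smult_assoc1[of "w n" y m] wc yc m by (simp add: g_def)
    also have "\<dots> = (\<ominus> w n \<oplus> w n) \<odot>\<^bsub>M\<^esub> (y \<odot>\<^bsub>M\<^esub> m)"
      using smult_l_distr[of "\<ominus> w n" "w n" "y \<odot>\<^bsub>M\<^esub> m"] wc ymc by simp
    also have "\<dots> = \<zero>\<^bsub>M\<^esub>" using wc ymc by (simp add: R.l_neg)
    finally show "g (?T w) = \<zero>\<^bsub>M\<^esub>" .
  qed
  have ker2: "\<And>v. v \<in> carrier ?F \<Longrightarrow> g v = \<zero>\<^bsub>M\<^esub> \<Longrightarrow> \<exists>w\<in>carrier ?F. v = ?T w"
  proof -
    fix v assume v: "v \<in> carrier ?F" and gv: "g v = \<zero>\<^bsub>M\<^esub>"
    note vc = Fc'[OF v] Fn[OF v]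
    have "h (g v) = h (f (qv R ?I n v)) \<oplus>\<^bsub>?B\<^esub> h (v n \<odot>\<^bsub>M\<^esub> m)"
      unfolding g_def using hadd fc[OF qvF[OF v]] smult_closed[OF Fn[OF v] m(1)] by simp
    also have "\<dots> = (?J +> \<zero>) \<oplus>\<^bsub>?B\<^esub> (?J +> v n)"
      using hf[OF Fc'[OF v]] hsmm[OF Fn[OF v]] a_rcos_zero[OF J additive_subgroup.zero_closed[OF ideal.axioms(1)[OF J]]]
      by simp
    also have "\<dots> = ?J +> v n" using quot_add[OF J] vc by simp
    finally have "?J +> v n = ?J" using gv h0 by simp
    hence "v n \<in> ?J" using rcos_zero_iff[OF J] vc by simp
    then obtain d where d: "d \<in> carrier R" "v n = d \<otimes> y" by (auto simp: PIdl_mem)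
    have "v n \<odot>\<^bsub>M\<^esub> m = d \<odot>\<^bsub>M\<^esub> (y \<odot>\<^bsub>M\<^esub> m)" using d smult_assoc1 yc m by simp
    also have "\<dots> = f (d \<odot>\<^bsub>?Q\<^esub> qv R ?I n b)" using ym fsm d qvc b by simp
    also have "\<dots> = f (qv R ?I n (\<lambda>j. d \<otimes> b j))" using qv_smult[OF I d(1)] b by simp
    finally have "\<zero>\<^bsub>M\<^esub> = f (qv R ?I n v) \<oplus>\<^bsub>M\<^esub> f (qv R ?I n (\<lambda>j. d \<otimes> b j))"
      using gv by (simp add: g_def)
    also have "\<dots> = f (qv R ?I n (\<lambda>j. v j \<oplus> d \<otimes> b j))"
      using fadd[OF qvF[OF v], of "qv R ?I n (\<lambda>j. d \<otimes> b j)"] qvc[of "\<lambda>j. d \<otimes> b j"] b d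
        qv_add[OF I, of n v "\<lambda>j. d \<otimes> b j"] vc by simp
    finally have "\<forall>j<n. v j \<oplus> d \<otimes> b j \<in> ?I" using finj0[of "\<lambda>j. v j \<oplus> d \<otimes> b j"] vc b d by simp
    hence "\<forall>j\<in>{..<n}. \<exists>t\<in>carrier R. v j \<oplus> d \<otimes> b j = t \<otimes> x" by (auto simp: PIdl_mem)
    then obtain t where t: "\<forall>j\<in>{..<n}. t j \<in> carrier R \<and> v j \<oplus> d \<otimes> b j = t j \<otimes> x" by metis
    define w where "w = (\<lambda>i\<in>{..<n+1}. if i < n then t i else d)"
    have wF: "w \<in> carrier ?F" using t d by (auto simp: w_def pow_mod_simps self_mod_simps)
    have wn: "w n = d" by (simp add: w_def)
    have wi: "\<And>i. i < n \<Longrightarrow> w i = t i" by (simp add: w_def)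
    have "v = ?T w"
    proof
      fix i
      show "v i = ?T w i"
      proof (cases "i < n+1")
        case False thus ?thesis using v by (simp add: TevSo pow_mod_simps PiE_def extensional_def)
      next
        case True
        show ?thesis
        proof (cases "i = n")
          case True thus ?thesis using d yc by (simp add: TevSn[OF wF] wn R.m_comm)
        next
          case False
          hence i: "i < n" using \<open>i < n+1\<close> by simp
          have "x \<otimes> t i \<oplus> \<ominus> b i \<otimes> d = v i"
          proof -
            have ti: "t i \<in> carrier R" "v i \<oplus> d \<otimes> b i = t i \<otimes> x" using t i by auto
            have bi: "b i \<in> carrier R" "v i \<in> carrier R" using b vc i by auto
            have e: "x \<otimes> t i = v i \<oplus> d \<otimes> b i" using ti xc R.m_comm by simp
            have "x \<otimes> t i \<oplus> \<ominus> b i \<otimes> d = (v i \<oplus> d \<otimes> b i) \<oplus> \<ominus> (d \<otimes> b i)"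
              unfolding e using bi d by (simp add: R.l_minus R.r_minus R.m_comm)
            also have "\<dots> = v i" using bi d by algebra
            finally show ?thesis .
          qed
          thus ?thesis using i by (simp add: TevS[OF wF] wn wi aS)
        qed
      qed
    qed
    thus "\<exists>w\<in>carrier ?F. v = ?T w" using wF by blast
  qed
  have colon: "\<forall>i\<in>{1..n}. a i \<in> colon_ideal R ?I (annihilator R y)"
  proof
    fix i assume i: "i \<in> {1..n}"
    show "a i \<in> colon_ideal R ?I (annihilator R y)"
      unfolding colon_ideal_def
    proof (intro CollectI conjI ballI)
      show "a i \<in> carrier R" using ac i by blast
    next
      fix s assume "s \<in> annihilator R y"
      hence s: "s \<in> carrier R" "s \<otimes> y = \<zero>" by (auto simp: annihilator_def)
      have "f (qv R ?I n (\<lambda>j. s \<otimes> b j)) = f (s \<odot>\<^bsub>?Q\<^esub> qv R ?I n b)"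
        using qv_smult[OF I s(1)] b by simp
      also have "\<dots> = s \<odot>\<^bsub>M\<^esub> (y \<odot>\<^bsub>M\<^esub> m)" using fsm s qvc b ym by simp
      also have "\<dots> = \<zero>\<^bsub>M\<^esub>" using smult_assoc1[of s y m] s yc m by simp
      finally have "\<forall>j<n. s \<otimes> b j \<in> ?I" using finj0[of "\<lambda>j. s \<otimes> b j"] s b by simp
      hence "s \<otimes> b (i - 1) \<in> ?I" using i by auto
      hence "\<ominus> (s \<otimes> b (i - 1)) \<in> ?I"
        using additive_subgroup.a_inv_closed[OF ideal.axioms(1)[OF I]] by blast
      moreover have "a i \<otimes> s = \<ominus> (s \<otimes> b (i - 1))"
      proof -
        have bi: "b (i - 1) \<in> carrier R" using b i by auto
        show ?thesis using s bi R.m_comm[OF bi s(1)] by (simp add: a_def R.l_minus)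
      qed
      ultimately show "a i \<otimes> s \<in> ?I" by simp
    qed
  qed
  have "presentation_exact R ?F ?F M ?T g"
    unfolding presentation_exact_def
  proof (intro conjI)
    show "?T \<in> mod_hom R ?F ?F" by (rule Th)
    show "g \<in> mod_hom R ?F M" by (rule g_hom)
    show "g ` carrier ?F = carrier M" by (rule gsurj)
    show "?T ` carrier ?F = mod_ker ?F M g"
    proof
      show "?T ` carrier ?F \<subseteq> mod_ker ?F M g" using TF ker1 by (auto simp: mod_ker_def)
      show "mod_ker ?F M g \<subseteq> ?T ` carrier ?F"
      proof
        fix v assume "v \<in> mod_ker ?F M g"
        hence v: "v \<in> carrier ?F" "g v = \<zero>\<^bsub>M\<^esub>" by (simp_all add: mod_ker_def)
        then obtain w where "w \<in> carrier ?F" "v = ?T w" using ker2 by blast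
        thus "v \<in> ?T ` carrier ?F" by blast
      qed
    qed
  qed
  thus ?thesis using colon by blast
qed


lemma (in cring) cancel_helper:
  assumes "a \<in> carrier R" "b \<in> carrier R" "a \<oplus> (\<ominus> \<one> \<otimes> b) = t"
  shows "a = b \<oplus> t"
proof -
  have "b \<oplus> (a \<oplus> (\<ominus> \<one> \<otimes> b)) = a" using assms(1,2) by algebra
  thus ?thesis using assms(3) by simp
qed

lemma (in module) dir21:
  assumes xc: "x \<in> carrier R" and yc: "y \<in> carrier R"
    and acol: "\<forall>i\<in>{1..n}. a i \<in> colon_ideal R (PIdl x) (annihilator R y)"
    and pe: "presentation_exact R (pow_mod (self_mod R) (n + 1)) (pow_mod (self_mod R) (n + 1)) M
          (mat_map R (n + 1) (n + 1) (T_mat R n x y a)) g0"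
  shows "\<exists>f g. short_exact R (pow_mod (quot_mod R (PIdl x)) n) M (quot_mod R (PIdl y)) f g"
proof -
  let ?I = "PIdl x" let ?J = "PIdl y"
  let ?Q = "pow_mod (quot_mod R ?I) n" let ?B = "quot_mod R ?J"
  let ?F = "pow_mod (self_mod R) (n+1)"
  let ?T = "mat_map R (n + 1) (n + 1) (T_mat R n x y a)"
  have I: "ideal ?I R" using xc by (rule cgenideal_ideal)
  have J: "ideal ?J R" using yc by (rule cgenideal_ideal)
  have ac: "\<forall>i\<in>{1..n}. a i \<in> carrier R" using acol by (auto simp: colon_ideal_def)
  have acS: "\<And>j. j < n \<Longrightarrow> a (Suc j) \<in> carrier R" using ac by auto
  from pe have gp: "?T ` carrier ?F = mod_ker ?F M g0" "g0 ` carrier ?F = carrier M" "g0 \<in> mod_hom R ?F M"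
    by (simp_all add: presentation_exact_def)
  have g0c: "\<And>v. v \<in> carrier ?F \<Longrightarrow> g0 v \<in> carrier M" using gp(3) by (auto simp: mod_hom_def)
  have g0add: "\<And>u v. u \<in> carrier ?F \<Longrightarrow> v \<in> carrier ?F \<Longrightarrow> g0 (u \<oplus>\<^bsub>?F\<^esub> v) = g0 u \<oplus>\<^bsub>M\<^esub> g0 v"
    using gp(3) by (auto simp: mod_hom_def)
  have g0sm: "\<And>r u. r \<in> carrier R \<Longrightarrow> u \<in> carrier ?F \<Longrightarrow> g0 (r \<odot>\<^bsub>?F\<^esub> u) = r \<odot>\<^bsub>M\<^esub> g0 u"
    using gp(3) by (auto simp: mod_hom_def)
  have Fc: "\<And>v i. v \<in> carrier ?F \<Longrightarrow> i < n+1 \<Longrightarrow> v i \<in> carrier R"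
    by (auto simp: pow_mod_simps self_mod_simps)
  have Fc': "\<And>v i. v \<in> carrier ?F \<Longrightarrow> i < n \<Longrightarrow> v i \<in> carrier R"
    using Fc by simp
  have Fn: "\<And>v. v \<in> carrier ?F \<Longrightarrow> v n \<in> carrier R" using Fc by simp
  have Fext: "\<And>v i. v \<in> carrier ?F \<Longrightarrow> \<not> i < Suc n \<Longrightarrow> v i = undefined"
    by (auto simp: pow_mod_simps PiE_def extensional_def)
  have Tev: "\<And>w. w \<in> carrier ?F \<Longrightarrow> ?T w = (\<lambda>i\<in>{..<n+1}. if i = n then y \<otimes> w n else x \<otimes> w i \<oplus> a (Suc i) \<otimes> w n)"
    using T_eval[OF ac xc yc] by (auto simp: pow_mod_simps self_mod_simps)
  have TevS: "\<And>w i. w \<in> carrier ?F \<Longrightarrow> i < n \<Longrightarrow> mat_map R (Suc n) (Suc n) (T_mat R n x y a) w i = x \<otimes> w i \<oplus> a (Suc i) \<otimes> w n"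
    using Tev by simp
  have TevSn: "\<And>w. w \<in> carrier ?F \<Longrightarrow> mat_map R (Suc n) (Suc n) (T_mat R n x y a) w n = y \<otimes> w n"
    using Tev by simp
  have TevSo: "\<And>w i. \<not> i < Suc n \<Longrightarrow> mat_map R (Suc n) (Suc n) (T_mat R n x y a) w i = undefined"
    by (simp add: mat_map_def)
  have Th: "?T \<in> mod_hom R ?F ?F" using T_hom[OF ac xc yc] by simp
  have TF: "\<And>w. w \<in> carrier ?F \<Longrightarrow> ?T w \<in> carrier ?F" using Th by (auto simp: mod_hom_def)
  have g0T: "\<And>w. w \<in> carrier ?F \<Longrightarrow> g0 (?T w) = \<zero>\<^bsub>M\<^esub>"
    using gp(1) by (auto simp: mod_ker_def)
  have EQ1: "\<And>v v' w. v \<in> carrier ?F \<Longrightarrow> v' \<in> carrier ?F \<Longrightarrow> w \<in> carrier ?F \<Longrightarrow>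
      (\<forall>i<n. v i = v' i \<oplus> (x \<otimes> w i \<oplus> a (Suc i) \<otimes> w n)) \<Longrightarrow> v n = v' n \<oplus> y \<otimes> w n \<Longrightarrow> g0 v = g0 v'"
  proof -
    fix v v' w assume v: "v \<in> carrier ?F" and v': "v' \<in> carrier ?F" and w: "w \<in> carrier ?F"
      and e1: "\<forall>i<n. v i = v' i \<oplus> (x \<otimes> w i \<oplus> a (Suc i) \<otimes> w n)" and e2: "v n = v' n \<oplus> y \<otimes> w n"
    have "v = v' \<oplus>\<^bsub>?F\<^esub> ?T w"
    proof
      fix i
      show "v i = (v' \<oplus>\<^bsub>?F\<^esub> ?T w) i"
      proof (cases "i < Suc n")
        case False thus ?thesis using Fext[OF v] by (simp add: pow_mod_simps)
      next
        case True
        show ?thesis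
        proof (cases "i = n")
          case True thus ?thesis using e2 TevSn[OF w] by (simp add: pow_mod_simps self_mod_simps)
        next
          case False
          hence "i < n" using \<open>i < Suc n\<close> by simp
          thus ?thesis using e1 TevS[OF w] by (simp add: pow_mod_simps self_mod_simps)
        qed
      qed
    qed
    hence "g0 v = g0 v' \<oplus>\<^bsub>M\<^esub> g0 (?T w)" using g0add[OF v' TF[OF w]] by simp
    thus "g0 v = g0 v'" using g0T[OF w] g0c[OF v'] by simp
  qed
  have EQ2: "\<And>v v'. v \<in> carrier ?F \<Longrightarrow> v' \<in> carrier ?F \<Longrightarrow> g0 v = g0 v' \<Longrightarrow>
      \<exists>w\<in>carrier ?F. (\<forall>i<n. v i = v' i \<oplus> (x \<otimes> w i \<oplus> a (Suc i) \<otimes> w n)) \<and> v n = v' n \<oplus> y \<otimes> w n"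
  proof -
    fix v v' assume v: "v \<in> carrier ?F" and v': "v' \<in> carrier ?F" and e: "g0 v = g0 v'"
    have m1: "\<ominus> \<one> \<in> carrier R" by simp
    have nv: "(\<ominus> \<one>) \<odot>\<^bsub>?F\<^esub> v' \<in> carrier ?F"
      using Fc[OF v'] by (auto simp: pow_mod_simps self_mod_simps)
    have uF: "v \<oplus>\<^bsub>?F\<^esub> ((\<ominus> \<one>) \<odot>\<^bsub>?F\<^esub> v') \<in> carrier ?F"
      using Fc[OF v'] Fc[OF v] by (auto simp: pow_mod_simps self_mod_simps)
    have "g0 (v \<oplus>\<^bsub>?F\<^esub> ((\<ominus> \<one>) \<odot>\<^bsub>?F\<^esub> v')) = g0 v \<oplus>\<^bsub>M\<^esub> ((\<ominus> \<one>) \<odot>\<^bsub>M\<^esub> g0 v')"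
      using g0add[OF v nv] g0sm[OF m1 v'] by simp
    also have "\<dots> = \<zero>\<^bsub>M\<^esub>" using e g0c[OF v'] smult_l_minus[of \<one> "g0 v'"] by (simp add: M.r_neg)
    finally have "v \<oplus>\<^bsub>?F\<^esub> ((\<ominus> \<one>) \<odot>\<^bsub>?F\<^esub> v') \<in> ?T ` carrier ?F"
      using uF gp(1) by (simp add: mod_ker_def)
    then obtain w where w: "w \<in> carrier ?F" and uw: "v \<oplus>\<^bsub>?F\<^esub> ((\<ominus> \<one>) \<odot>\<^bsub>?F\<^esub> v') = ?T w" by auto
    have pt: "\<And>i. i < Suc n \<Longrightarrow> v i = v' i \<oplus> ?T w i"
    proof -
      fix i assume i: "i < Suc n"
      have "v i \<oplus> (\<ominus> \<one> \<otimes> v' i) = ?T w i" using fun_cong[OF uw, of i] i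
        by (simp add: pow_mod_simps self_mod_simps)
      thus "v i = v' i \<oplus> ?T w i" using cancel_helper Fc[OF v] Fc[OF v'] i by simp
    qed
    have "\<forall>i<n. v i = v' i \<oplus> (x \<otimes> w i \<oplus> a (Suc i) \<otimes> w n)"
      using pt TevS[OF w] by simp
    moreover have "v n = v' n \<oplus> y \<otimes> w n" using pt[of n] TevSn[OF w] by simp
    ultimately show "\<exists>w\<in>carrier ?F. (\<forall>i<n. v i = v' i \<oplus> (x \<otimes> w i \<oplus> a (Suc i) \<otimes> w n)) \<and> v n = v' n \<oplus> y \<otimes> w n"
      using w by blast
  qed
  define liftc where "liftc = (\<lambda>c. \<lambda>i\<in>{..<n+1}. if i < n then c i else \<zero>)"
  have liftcF: "\<And>c. (\<forall>j<n. c j \<in> carrier R) \<Longrightarrow> liftc c \<in> carrier ?F"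
    by (auto simp: liftc_def pow_mod_simps self_mod_simps)
  have liftc_i: "\<And>c i. i < n \<Longrightarrow> liftc c i = c i" by (simp add: liftc_def)
  have liftc_n: "\<And>c. liftc c n = \<zero>" by (simp add: liftc_def)
  have PI: "\<And>c d. (\<forall>j<n. c j \<in> carrier R) \<Longrightarrow> (\<forall>j<n. d j \<in> carrier R) \<Longrightarrow> (\<forall>j<n. c j \<ominus> d j \<in> ?I)
      \<Longrightarrow> g0 (liftc c) = g0 (liftc d)"
  proof -
    fix c d assume c: "\<forall>j<n. c j \<in> carrier R" and d: "\<forall>j<n. d j \<in> carrier R" and cd: "\<forall>j<n. c j \<ominus> d j \<in> ?I"
    hence "\<forall>j\<in>{..<n}. \<exists>t\<in>carrier R. c j \<ominus> d j = t \<otimes> x" by (auto simp: PIdl_mem)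
    then obtain t where t: "\<forall>j\<in>{..<n}. t j \<in> carrier R \<and> c j \<ominus> d j = t j \<otimes> x" by metis
    define w where "w = (\<lambda>i\<in>{..<n+1}. if i < n then t i else \<zero>)"
    have wF: "w \<in> carrier ?F" using t by (auto simp: w_def pow_mod_simps self_mod_simps)
    show "g0 (liftc c) = g0 (liftc d)"
    proof (rule EQ1[OF liftcF[OF c] liftcF[OF d] wF])
      show "\<forall>i<n. liftc c i = liftc d i \<oplus> (x \<otimes> w i \<oplus> a (Suc i) \<otimes> w n)"
      proof (intro allI impI)
        fix i assume i: "i < n"
        have ti: "t i \<in> carrier R" "c i \<ominus> d i = t i \<otimes> x" using t i by auto
        have ci: "c i \<in> carrier R" "d i \<in> carrier R" using c d i by auto
        have "d i \<oplus> (x \<otimes> t i \<oplus> a (Suc i) \<otimes> \<zero>) = d i \<oplus> (c i \<ominus> d i)"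
          using ti xc acS[OF i] by (simp add: R.m_comm)
        also have "\<dots> = c i" using ci by algebra
        finally show "liftc c i = liftc d i \<oplus> (x \<otimes> w i \<oplus> a (Suc i) \<otimes> w n)"
          using i by (simp add: liftc_i w_def)
      qed
      show "liftc c n = liftc d n \<oplus> y \<otimes> w n" using yc by (simp add: liftc_n w_def)
    qed
  qed
  define f where "f = (\<lambda>u. g0 (liftc (\<lambda>j. SOME r. r \<in> carrier R \<and> u j = ?I +> r)))"
  have FQ: "\<And>c. (\<forall>j<n. c j \<in> carrier R) \<Longrightarrow> f (qv R ?I n c) = g0 (liftc c)"
  proof -
    fix c assume c: "\<forall>j<n. c j \<in> carrier R"
    define r where "r = (\<lambda>j. SOME r. r \<in> carrier R \<and> qv R ?I n c j = ?I +> r)"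
    have r: "\<forall>j<n. r j \<in> carrier R \<and> ?I +> c j = ?I +> r j"
    proof (intro allI impI)
      fix j assume j: "j < n"
      have "\<exists>r. r \<in> carrier R \<and> qv R ?I n c j = ?I +> r" using c j by (auto simp: qv_def)
      hence "r j \<in> carrier R \<and> qv R ?I n c j = ?I +> r j" unfolding r_def by (rule someI_ex)
      thus "r j \<in> carrier R \<and> ?I +> c j = ?I +> r j" using j by (simp add: qv_def)
    qed
    have "\<forall>j<n. r j \<ominus> c j \<in> ?I" using r c rcos_eq_iff[OF I] by metis
    hence "g0 (liftc r) = g0 (liftc c)" using PI r c by blast
    thus "f (qv R ?I n c) = g0 (liftc c)" by (simp add: f_def r_def)
  qed
  have qvc: "\<And>c. (\<forall>j<n. c j \<in> carrier R) \<Longrightarrow> qv R ?I n c \<in> carrier ?Q"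
    using qv_carrier[OF I] by blast
  define pick where "pick = (\<lambda>z. SOME v. v \<in> carrier ?F \<and> g0 v = z)"
  have pick: "\<And>z. z \<in> carrier M \<Longrightarrow> pick z \<in> carrier ?F \<and> g0 (pick z) = z"
  proof -
    fix z assume "z \<in> carrier M"
    hence "\<exists>v. v \<in> carrier ?F \<and> g0 v = z" using gp(2) by (metis imageE)
    thus "pick z \<in> carrier ?F \<and> g0 (pick z) = z" unfolding pick_def by (rule someI_ex)
  qed
  define g where "g = (\<lambda>z. ?J +> pick z n)"
  have G: "\<And>v. v \<in> carrier ?F \<Longrightarrow> g (g0 v) = ?J +> v n"
  proof -
    fix v assume v: "v \<in> carrier ?F"
    have p: "pick (g0 v) \<in> carrier ?F" "g0 (pick (g0 v)) = g0 v" using pick g0c[OF v] by auto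
    then obtain w where w: "w \<in> carrier ?F" "pick (g0 v) n = v n \<oplus> y \<otimes> w n"
      using EQ2[OF p(1) v p(2)] by blast
    have "pick (g0 v) n \<ominus> v n = w n \<otimes> y" using w Fn[OF v] Fn[OF w(1)] yc by simp algebra
    hence "pick (g0 v) n \<ominus> v n \<in> ?J" using Fn[OF w(1)] by (auto simp: PIdl_mem)
    thus "g (g0 v) = ?J +> v n" unfolding g_def using rcos_eq_iff[OF J] Fn[OF p(1)] Fn[OF v] by blast
  qed
  have Qrep: "\<And>u. u \<in> carrier ?Q \<Longrightarrow> \<exists>c. (\<forall>j<n. c j \<in> carrier R) \<and> u = qv R ?I n c"
    using qv_rep by blast
  have Msurj: "\<And>z. z \<in> carrier M \<Longrightarrow> \<exists>v\<in>carrier ?F. z = g0 v" using gp(2) by auto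
  have f_hom: "f \<in> mod_hom R ?Q M"
    unfolding mod_hom_def
  proof (intro CollectI conjI ballI)
    show "f \<in> carrier ?Q \<rightarrow> carrier M"
    proof
      fix u assume "u \<in> carrier ?Q"
      then obtain c where c: "\<forall>j<n. c j \<in> carrier R" "u = qv R ?I n c" using Qrep by blast
      thus "f u \<in> carrier M" using FQ g0c liftcF by simp
    qed
  next
    fix u v assume u: "u \<in> carrier ?Q" and v: "v \<in> carrier ?Q"
    obtain c where c: "\<forall>j<n. c j \<in> carrier R" "u = qv R ?I n c" using Qrep u by blast
    obtain d where d: "\<forall>j<n. d j \<in> carrier R" "v = qv R ?I n d" using Qrep v by blast
    have cd: "\<forall>j<n. c j \<oplus> d j \<in> carrier R" using c d by simp
    have "u \<oplus>\<^bsub>?Q\<^esub> v = qv R ?I n (\<lambda>j. c j \<oplus> d j)" using qv_add[OF I] c d by simp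
    hence "f (u \<oplus>\<^bsub>?Q\<^esub> v) = g0 (liftc (\<lambda>j. c j \<oplus> d j))" using FQ[OF cd] by simp
    also have "liftc (\<lambda>j. c j \<oplus> d j) = liftc c \<oplus>\<^bsub>?F\<^esub> liftc d"
      by (rule ext) (simp add: liftc_def pow_mod_simps self_mod_simps)
    also have "g0 \<dots> = g0 (liftc c) \<oplus>\<^bsub>M\<^esub> g0 (liftc d)" using g0add liftcF c d by simp
    finally show "f (u \<oplus>\<^bsub>?Q\<^esub> v) = f u \<oplus>\<^bsub>M\<^esub> f v" using FQ c d by simp
  next
    fix r u assume r: "r \<in> carrier R" and u: "u \<in> carrier ?Q"
    obtain c where c: "\<forall>j<n. c j \<in> carrier R" "u = qv R ?I n c" using Qrep u by blast
    have rc: "\<forall>j<n. r \<otimes> c j \<in> carrier R" using c r by simp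
    have "r \<odot>\<^bsub>?Q\<^esub> u = qv R ?I n (\<lambda>j. r \<otimes> c j)" using qv_smult[OF I r] c by simp
    hence "f (r \<odot>\<^bsub>?Q\<^esub> u) = g0 (liftc (\<lambda>j. r \<otimes> c j))" using FQ[OF rc] by simp
    also have "liftc (\<lambda>j. r \<otimes> c j) = r \<odot>\<^bsub>?F\<^esub> liftc c"
      by (rule ext) (simp add: liftc_def pow_mod_simps self_mod_simps r)
    also have "g0 \<dots> = r \<odot>\<^bsub>M\<^esub> g0 (liftc c)" using g0sm r liftcF c by simp
    finally show "f (r \<odot>\<^bsub>?Q\<^esub> u) = r \<odot>\<^bsub>M\<^esub> f u" using FQ c by simp
  qed
  have g_hom: "g \<in> mod_hom R M ?B"
    unfolding mod_hom_def
  proof (intro CollectI conjI ballI)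
    show "g \<in> carrier M \<rightarrow> carrier ?B"
    proof
      fix z assume "z \<in> carrier M"
      hence "pick z n \<in> carrier R" using pick Fn by blast
      thus "g z \<in> carrier ?B" unfolding g_def using rcos_in_rcosets[OF J] by (simp add: quot_mod_simps)
    qed
  next
    fix z z' assume z: "z \<in> carrier M" and z': "z' \<in> carrier M"
    obtain v where v: "v \<in> carrier ?F" "z = g0 v" using Msurj z by blast
    obtain v' where v': "v' \<in> carrier ?F" "z' = g0 v'" using Msurj z' by blast
    have vv: "v \<oplus>\<^bsub>?F\<^esub> v' \<in> carrier ?F" using Fc[OF v(1)] Fc[OF v'(1)]
      by (auto simp: pow_mod_simps self_mod_simps)
    have "g (z \<oplus>\<^bsub>M\<^esub> z') = g (g0 (v \<oplus>\<^bsub>?F\<^esub> v'))" using g0add v v' by simp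
    also have "\<dots> = ?J +> (v n \<oplus> v' n)" using G[OF vv] by (simp add: pow_mod_simps self_mod_simps)
    also have "\<dots> = (?J +> v n) \<oplus>\<^bsub>?B\<^esub> (?J +> v' n)" using quot_add[OF J] Fn v v' by simp
    finally show "g (z \<oplus>\<^bsub>M\<^esub> z') = g z \<oplus>\<^bsub>?B\<^esub> g z'" using G v v' by simp
  next
    fix r z assume r: "r \<in> carrier R" and z: "z \<in> carrier M"
    obtain v where v: "v \<in> carrier ?F" "z = g0 v" using Msurj z by blast
    have rv: "r \<odot>\<^bsub>?F\<^esub> v \<in> carrier ?F" using Fc[OF v(1)] r
      by (auto simp: pow_mod_simps self_mod_simps)
    have "g (r \<odot>\<^bsub>M\<^esub> z) = g (g0 (r \<odot>\<^bsub>?F\<^esub> v))" using g0sm r v by simp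
    also have "\<dots> = ?J +> (r \<otimes> v n)" using G[OF rv] by (simp add: pow_mod_simps self_mod_simps)
    also have "\<dots> = r \<odot>\<^bsub>?B\<^esub> (?J +> v n)" using quot_smult[OF J] Fn v r by simp
    finally show "g (r \<odot>\<^bsub>M\<^esub> z) = r \<odot>\<^bsub>?B\<^esub> g z" using G v by simp
  qed
  have f_inj: "inj_on f (carrier ?Q)"
  proof (rule inj_onI)
    fix u v assume u: "u \<in> carrier ?Q" and v: "v \<in> carrier ?Q" and e: "f u = f v"
    obtain c where c: "\<forall>j<n. c j \<in> carrier R" "u = qv R ?I n c" using Qrep u by blast
    obtain d where d: "\<forall>j<n. d j \<in> carrier R" "v = qv R ?I n d" using Qrep v by blast
    have "g0 (liftc c) = g0 (liftc d)" using e FQ c d by simp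
    then obtain w where w: "w \<in> carrier ?F" and w1: "\<forall>i<n. liftc c i = liftc d i \<oplus> (x \<otimes> w i \<oplus> a (Suc i) \<otimes> w n)"
      and w2: "liftc c n = liftc d n \<oplus> y \<otimes> w n"
      using EQ2[OF liftcF[OF c(1)] liftcF[OF d(1)]] by blast
    have wn: "w n \<in> carrier R" using Fn[OF w] .
    have "y \<otimes> w n = \<zero>" using w2 wn yc by (simp add: liftc_n)
    hence ann: "w n \<in> annihilator R y" using wn yc by (simp add: annihilator_def R.m_comm)
    have "\<forall>j<n. c j \<ominus> d j \<in> ?I"
    proof (intro allI impI)
      fix j assume j: "j < n"
      have cj: "c j \<in> carrier R" "d j \<in> carrier R" "w j \<in> carrier R" "a (Suc j) \<in> carrier R"
        using c d j Fc'[OF w] acS by auto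
      have "Suc j \<in> {1..n}" using j by simp
      hence aI: "a (Suc j) \<otimes> w n \<in> ?I" using acol ann by (auto simp: colon_ideal_def)
      have xI: "x \<otimes> w j \<in> ?I" unfolding PIdl_mem using cj xc R.m_comm[of x "w j"] by blast
      have sI: "x \<otimes> w j \<oplus> a (Suc j) \<otimes> w n \<in> ?I"
        using additive_subgroup.a_closed[OF ideal.axioms(1)[OF I] xI aI] .
      have "c j = d j \<oplus> (x \<otimes> w j \<oplus> a (Suc j) \<otimes> w n)" using w1 j by (simp add: liftc_i)
      hence "c j \<ominus> d j = x \<otimes> w j \<oplus> a (Suc j) \<otimes> w n" using cj wn xc by simp algebra
      thus "c j \<ominus> d j \<in> ?I" using sI by simp
    qed
    thus "u = v" using c d qv_eq[OF I] by simp
  qed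
  have gsurj: "g ` carrier M = carrier ?B"
  proof
    show "g ` carrier M \<subseteq> carrier ?B" using g_hom by (auto simp: mod_hom_def)
    show "carrier ?B \<subseteq> g ` carrier M"
    proof
      fix X assume "X \<in> carrier ?B"
      then obtain c where c: "c \<in> carrier R" "X = ?J +> c" using rcosets_rep by (auto simp: quot_mod_simps)
      define v where "v = (\<lambda>i\<in>{..<n+1}. if i < n then \<zero> else c)"
      have vF: "v \<in> carrier ?F" using c by (auto simp: v_def pow_mod_simps self_mod_simps)
      have "g (g0 v) = X" using G[OF vF] c by (simp add: v_def)
      thus "X \<in> g ` carrier M" using g0c[OF vF] by blast
    qed
  qed
  have ker: "f ` carrier ?Q = mod_ker M ?B g"
  proof
    show "f ` carrier ?Q \<subseteq> mod_ker M ?B g"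
    proof
      fix z assume "z \<in> f ` carrier ?Q"
      then obtain u where u: "u \<in> carrier ?Q" "z = f u" by blast
      obtain c where c: "\<forall>j<n. c j \<in> carrier R" "u = qv R ?I n c" using Qrep u by blast
      have z: "z = g0 (liftc c)" using FQ c u by simp
      have "g z = ?J +> \<zero>" using G[OF liftcF[OF c(1)]] z by (simp add: liftc_n)
      also have "\<dots> = ?J" using a_rcos_zero[OF J additive_subgroup.zero_closed[OF ideal.axioms(1)[OF J]]] .
      finally show "z \<in> mod_ker M ?B g" using z g0c liftcF c by (simp add: mod_ker_def quot_mod_simps)
    qed
    show "mod_ker M ?B g \<subseteq> f ` carrier ?Q"
    proof
      fix z assume "z \<in> mod_ker M ?B g"
      hence z: "z \<in> carrier M" "g z = ?J" by (simp_all add: mod_ker_def quot_mod_simps)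
      obtain v where v: "v \<in> carrier ?F" "z = g0 v" using Msurj z(1) by blast
      have "?J +> v n = ?J" using G[OF v(1)] v z by simp
      hence "v n \<in> ?J" using rcos_zero_iff[OF J Fn[OF v(1)]] by simp
      then obtain d where d: "d \<in> carrier R" "v n = d \<otimes> y" by (auto simp: PIdl_mem)
      define c where "c = (\<lambda>j. v j \<oplus> \<ominus> (a (Suc j) \<otimes> d))"
      have cc: "\<forall>j<n. c j \<in> carrier R" using Fc'[OF v(1)] acS d by (simp add: c_def)
      define w where "w = (\<lambda>i\<in>{..<n+1}. if i < n then \<zero> else \<ominus> d)"
      have wF: "w \<in> carrier ?F" using d by (auto simp: w_def pow_mod_simps self_mod_simps)
      have "g0 (liftc c) = g0 v"
      proof (rule EQ1[OF liftcF[OF cc] v(1) wF])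
        show "\<forall>i<n. liftc c i = v i \<oplus> (x \<otimes> w i \<oplus> a (Suc i) \<otimes> w n)"
        proof (intro allI impI)
          fix i assume i: "i < n"
          have "v i \<in> carrier R" "a (Suc i) \<in> carrier R" using Fc'[OF v(1)] acS i by auto
          thus "liftc c i = v i \<oplus> (x \<otimes> w i \<oplus> a (Suc i) \<otimes> w n)"
            using i xc d by (simp add: liftc_i c_def w_def R.r_minus)
        qed
        show "liftc c n = v n \<oplus> y \<otimes> w n"
          using d yc by (simp add: liftc_n w_def R.r_minus R.m_comm R.r_neg)
      qed
      hence "z = f (qv R ?I n c)" using FQ[OF cc] v by simp
      thus "z \<in> f ` carrier ?Q" using qvc[OF cc] by blast
    qed
  qed
  have "short_exact R ?Q M ?B f g"
    unfolding short_exact_def using f_hom g_hom f_inj ker gsurj by blast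
  thus ?thesis by blast
qed

theorem lemma3p3:
  fixes R :: "'a ring" and M :: "('a, 'b) module" and x y :: 'a and n :: nat
  assumes "local_cring R" and "noetherian_ring R"
    and "x \<in> carrier R" and "y \<in> carrier R"
    and "module R M"
  shows "(\<exists>f g. short_exact R (pow_mod (quot_mod R (PIdl\<^bsub>R\<^esub> x)) n) M
                   (quot_mod R (PIdl\<^bsub>R\<^esub> y)) f g)
     \<longleftrightarrow> (\<exists>a g. (\<forall>i\<in>{1..n}. a i \<in> colon_ideal R (PIdl\<^bsub>R\<^esub> x) (annihilator R y))
              \<and> presentation_exact R (pow_mod (self_mod R) (n + 1)) (pow_mod (self_mod R) (n + 1)) M
                   (mat_map R (n + 1) (n + 1) (T_mat R n x y a)) g)"
  proof -
  have "module R M" by fact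
  show ?thesis
  proof
    assume "\<exists>f g. short_exact R (pow_mod (quot_mod R (PIdl\<^bsub>R\<^esub> x)) n) M
                   (quot_mod R (PIdl\<^bsub>R\<^esub> y)) f g"
    then obtain f g where "short_exact R (pow_mod (quot_mod R (PIdl\<^bsub>R\<^esub> x)) n) M
                   (quot_mod R (PIdl\<^bsub>R\<^esub> y)) f g" by blast
    thus "\<exists>a g. (\<forall>i\<in>{1..n}. a i \<in> colon_ideal R (PIdl\<^bsub>R\<^esub> x) (annihilator R y))
              \<and> presentation_exact R (pow_mod (self_mod R) (n + 1)) (pow_mod (self_mod R) (n + 1)) M
                   (mat_map R (n + 1) (n + 1) (T_mat R n x y a)) g"
      using module.dir12[OF assms(5) assms(3) assms(4)] by blast
  next
    assume "\<exists>a g. (\<forall>i\<in>{1..n}. a i \<in> colon_ideal R (PIdl\<^bsub>R\<^esub> x) (annihilator R y))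
              \<and> presentation_exact R (pow_mod (self_mod R) (n + 1)) (pow_mod (self_mod R) (n + 1)) M
                   (mat_map R (n + 1) (n + 1) (T_mat R n x y a)) g"
    then obtain a g where "\<forall>i\<in>{1..n}. a i \<in> colon_ideal R (PIdl\<^bsub>R\<^esub> x) (annihilator R y)"
      "presentation_exact R (pow_mod (self_mod R) (n + 1)) (pow_mod (self_mod R) (n + 1)) M
                   (mat_map R (n + 1) (n + 1) (T_mat R n x y a)) g" by blast
    thus "\<exists>f g. short_exact R (pow_mod (quot_mod R (PIdl\<^bsub>R\<^esub> x)) n) M
                   (quot_mod R (PIdl\<^bsub>R\<^esub> y)) f g"
      using module.dir21[OF assms(5) assms(3) assms(4)] by blast
  qed
qed

end
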